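(* If $G$ is a connected locally Dirac graph of order at least $4$, then $G$ is $3$-connected.
   Context: A graph $G$ is locally Dirac if for every vertex $v \in V(G)$ and every $u \in N(v)$, $\deg_{\langle N(v)\rangle}(u) \ge \deg_G(v)/2$, where $N(v)$ is the open neighbourhood of $v$ and $\langle N(v)\rangle$ the subgraph induced by it. *)

theory Defs
  imports Complex_Main
begin

definition graph :: "'a set \<Rightarrow> ('a \<Rightarrow> 'a \<Rightarrow> bool) \<Rightarrow> bool" where
  "graph V E \<longleftrightarrow> finite V \<and> (\<forall>u v. E u v \<longrightarrow> u \<in> V \<and> v \<in> V)
     \<and> (\<forall>u v. E u v \<longrightarrow> E v u) \<and> (\<forall>v. \<not> E v v)"

definition nbhd :: "'a set \<Rightarrow> ('a \<Rightarrow> 'a \<Rightarrow> bool) \<Rightarrow> 'a \<Rightarrow> 'a set" where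
  "nbhd V E v = {u \<in> V. E v u}"

definition degree :: "'a set \<Rightarrow> ('a \<Rightarrow> 'a \<Rightarrow> bool) \<Rightarrow> 'a \<Rightarrow> nat" where
  "degree V E v = card (nbhd V E v)"

definition induced_degree :: "'a set \<Rightarrow> ('a \<Rightarrow> 'a \<Rightarrow> bool) \<Rightarrow> 'a set \<Rightarrow> 'a \<Rightarrow> nat" where
  "induced_degree V E S u = card {w \<in> S. E u w}"

definition locally_dirac :: "'a set \<Rightarrow> ('a \<Rightarrow> 'a \<Rightarrow> bool) \<Rightarrow> bool" where
  "locally_dirac V E \<longleftrightarrow> (\<forall>v\<in>V. \<forall>u\<in>nbhd V E v.
     real (induced_degree V E (nbhd V E v) u) \<ge> real (degree V E v) / 2)"

definition connected_on :: "('a \<Rightarrow> 'a \<Rightarrow> bool) \<Rightarrow> 'a set \<Rightarrow> bool" where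
  "connected_on E S \<longleftrightarrow> S \<noteq> {} \<and>
     (\<forall>u\<in>S. \<forall>v\<in>S. (\<lambda>x y. x \<in> S \<and> y \<in> S \<and> E x y)\<^sup>*\<^sup>* u v)"

definition connected_graph :: "'a set \<Rightarrow> ('a \<Rightarrow> 'a \<Rightarrow> bool) \<Rightarrow> bool" where
  "connected_graph V E \<longleftrightarrow> connected_on E V"

definition k_connected :: "nat \<Rightarrow> 'a set \<Rightarrow> ('a \<Rightarrow> 'a \<Rightarrow> bool) \<Rightarrow> bool" where
  "k_connected k V E \<longleftrightarrow> card V > k \<and>
     (\<forall>X. X \<subseteq> V \<and> card X < k \<longrightarrow> connected_on E (V - X))"

end

theory Submission
  imports Defs
begin

lemma lemA:
  assumes g: "graph V E" and ld: "locally_dirac V E" and XV: "X \<subseteq> V" and cX: "card X < 3"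
    and x: "x \<in> X" and p: "p \<in> nbhd V E x" "p \<notin> X" and q: "q \<in> nbhd V E x" "q \<notin> X"
  shows "(\<lambda>a b. a \<in> V - X \<and> b \<in> V - X \<and> E a b)\<^sup>*\<^sup>* p q"
proof -
  have finV: "finite V" using g unfolding graph_def by auto
  have finX: "finite X" using XV finV finite_subset by auto
  have xV: "x \<in> V" using x XV by auto
  have pV: "p \<in> V" and qV: "q \<in> V" using p q unfolding nbhd_def by auto
  consider "p = q" | "E p q" | "p \<noteq> q" "\<not> E p q" by blast
  then show ?thesis
  proof cases
    case 1 then show ?thesis by simp
  next
    case 2 then show ?thesis using pV qV p q by (auto intro: r_into_rtranclp)
  next
    case 3
    define N where "N = nbhd V E x"
    define A where "A = {w \<in> N. E p w}"
    define B where "B = {w \<in> N. E q w}"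
    have finN: "finite N" unfolding N_def nbhd_def using finV by auto
    have "real (card N) / 2 \<le> real (card A)"
      using ld xV p(1) unfolding locally_dirac_def induced_degree_def degree_def A_def N_def by blast
    hence dA: "card N \<le> 2 * card A" by linarith
    have "real (card N) / 2 \<le> real (card B)"
      using ld xV q(1) unfolding locally_dirac_def induced_degree_def degree_def B_def N_def by blast
    hence dB: "card N \<le> 2 * card B" by linarith
    have AB: "A \<union> B \<subseteq> N - {p,q}" using g 3 unfolding graph_def A_def B_def by auto
    have pqN: "{p,q} \<subseteq> N" using p q N_def by auto
    have cN: "card (N - {p,q}) = card N - 2"
      using card_Diff_subset[OF _ pqN] finN 3 by (simp add: finite_subset[OF pqN])
    have c2: "card {p,q} \<le> card N" using card_mono[OF finN pqN] .
    have c2': "card {p,q} = 2" using 3 by simp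
    have cU: "card (A \<union> B) \<le> card N - 2"
      using card_mono[OF _ AB] finN cN by auto
    show ?thesis
    proof (rule ccontr)
      assume nR: "\<not> ?thesis"
      have "A \<inter> B \<subseteq> X - {x}"
      proof
        fix w assume w: "w \<in> A \<inter> B"
        have wV: "w \<in> V" and Exw: "E x w" using w unfolding A_def B_def N_def nbhd_def by auto
        have "w \<noteq> x" using Exw g unfolding graph_def by auto
        moreover have "w \<in> X"
        proof (rule ccontr)
          assume "w \<notin> X"
          moreover have "E p w" "E q w" using w unfolding A_def B_def by auto
          moreover have "E w q" using \<open>E q w\<close> g unfolding graph_def by auto
          ultimately have s1: "p \<in> V - X \<and> w \<in> V - X \<and> E p w"
            and s2: "w \<in> V - X \<and> q \<in> V - X \<and> E w q"
            using pV qV wV p q by auto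
          define R where "R = (\<lambda>a b. a \<in> V - X \<and> b \<in> V - X \<and> E a b)"
          have "R p w" "R w q" using s1 s2 unfolding R_def by auto
          hence rr: "R\<^sup>*\<^sup>* p q" by (meson converse_rtranclp_into_rtranclp r_into_rtranclp)
          have "(\<lambda>a b. a \<in> V - X \<and> b \<in> V - X \<and> E a b)\<^sup>*\<^sup>* p q" using rr unfolding R_def by simp
          thus False using nR by simp
        qed
        ultimately show "w \<in> X - {x}" by auto
      qed
      hence "card (A \<inter> B) \<le> card (X - {x})" using card_mono finX by blast
      also have "\<dots> \<le> 1" using x finX cX by simp
      finally have cI: "card (A \<inter> B) \<le> 1" .
      have "card A + card B = card (A \<union> B) + card (A \<inter> B)"
        using card_Un_Int[of A B] finN unfolding A_def B_def by auto
      thus False using cI cU dA dB c2 c2' by linarith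
    qed
  qed
qed

lemma lemB:
  assumes g: "graph V E" and ld: "locally_dirac V E" and XV: "X \<subseteq> V" and cX: "card X < 3"
    and x: "x \<in> X" and y: "y \<in> X" and Exy: "E x y"
  shows "\<exists>c. c \<in> V - X \<and> E x c \<and> E y c"
proof -
  have finV: "finite V" using g unfolding graph_def by auto
  have finX: "finite X" using XV finV finite_subset by auto
  have xV: "x \<in> V" using x XV by auto
  have yN: "y \<in> nbhd V E x" using Exy g unfolding nbhd_def graph_def by auto
  have finN: "finite (nbhd V E x)" unfolding nbhd_def using finV by auto
  have "card (nbhd V E x) > 0" using yN finN card_gt_0_iff by blast
  moreover have "real (card (nbhd V E x)) / 2 \<le> real (card {w \<in> nbhd V E x. E y w})"
    using ld xV yN unfolding locally_dirac_def induced_degree_def degree_def by blast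
  ultimately have "card {w \<in> nbhd V E x. E y w} > 0" by linarith
  then obtain w where w: "w \<in> nbhd V E x" "E y w"
    by (metis (no_types, lifting) card.empty empty_iff less_irrefl mem_Collect_eq subsetI subset_antisym)
  have wV: "w \<in> V" and Exw: "E x w" using w unfolding nbhd_def by auto
  have wx: "w \<noteq> x" "w \<noteq> y" "x \<noteq> y" using Exw w(2) Exy g unfolding graph_def by auto
  have "w \<notin> X"
  proof
    assume "w \<in> X"
    hence "{x,y,w} \<subseteq> X" using x y by auto
    hence "card {x,y,w} \<le> card X" using card_mono finX by blast
    thus False using wx cX by simp
  qed
  thus ?thesis using wV Exw w(2) by blast
qed

theorem mainTheorem5:
  fixes V :: "'a set" and E :: "'a \<Rightarrow> 'a \<Rightarrow> bool"
  assumes "graph V E"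
    and "connected_graph V E"
    and "locally_dirac V E"
    and "card V \<ge> 4"
  shows "k_connected 3 V E"
  unfolding k_connected_def
proof (intro conjI allI impI)
  show "3 < card V" using assms(4) by simp
  fix X assume XX: "X \<subseteq> V \<and> card X < 3"
  hence XV: "X \<subseteq> V" and cX: "card X < 3" by auto
  have finV: "finite V" using assms(1) unfolding graph_def by auto
  have finX: "finite X" using XV finV finite_subset by auto
  let ?R = "(\<lambda>a b. a \<in> V - X \<and> b \<in> V - X \<and> E a b)\<^sup>*\<^sup>*"
  have "card (V - X) = card V - card X" using card_Diff_subset[OF finX XV] .
  hence ne: "V - X \<noteq> {}" using cX assms(4) finV by (metis Diff_eq_empty_iff card_mono finX le_trans not_less numeral_le_iff semiring_norm(69) semiring_norm(72) less_imp_le)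
  have conn: "\<forall>u\<in>V. \<forall>v\<in>V. (\<lambda>x y. x \<in> V \<and> y \<in> V \<and> E x y)\<^sup>*\<^sup>* u v"
    using assms(2) unfolding connected_graph_def connected_on_def by blast
  have main: "(v \<notin> X \<longrightarrow> ?R a v) \<and> (v \<in> X \<longrightarrow> (\<forall>p\<in>nbhd V E v. p \<notin> X \<longrightarrow> ?R a p))"
    if aX: "a \<in> V - X" and w: "(\<lambda>x y. x \<in> V \<and> y \<in> V \<and> E x y)\<^sup>*\<^sup>* a v" for a v
    using w
  proof (induction rule: rtranclp_induct)
    case base
    then show ?case using aX by auto
  next
    case (step v w)
    have vV: "v \<in> V" and wV: "w \<in> V" and Evw: "E v w" using step(2) by auto
    have Ewv: "E w v" using Evw assms(1) unfolding graph_def by auto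
    show ?case
    proof (cases "v \<in> X")
      case False
      hence Rv: "?R a v" using step(3) by auto
      show ?thesis
      proof (intro conjI impI ballI)
        assume "w \<notin> X"
        then show "?R a w" using Rv False vV wV Evw by (auto intro: rtranclp.rtrancl_into_rtrancl)
      next
        fix p assume "w \<in> X" "p \<in> nbhd V E w" "p \<notin> X"
        moreover have "v \<in> nbhd V E w" using Ewv vV unfolding nbhd_def by auto
        ultimately have "?R v p" using lemA[OF assms(1) assms(3) XV cX, of w v p] False by blast
        thus "?R a p" using Rv by (meson rtranclp_trans)
      qed
    next
      case True
      hence IH: "\<forall>p\<in>nbhd V E v. p \<notin> X \<longrightarrow> ?R a p" using step(3) by auto
      have wN: "w \<in> nbhd V E v" using Evw wV unfolding nbhd_def by auto
      show ?thesis
      proof (intro conjI impI ballI)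
        assume "w \<notin> X"
        then show "?R a w" using IH wN by auto
      next
        fix p assume wX: "w \<in> X" and pN: "p \<in> nbhd V E w" and pX: "p \<notin> X"
        obtain c where c: "c \<in> V - X" "E v c" "E w c"
          using lemB[OF assms(1) assms(3) XV cX True wX Evw] by blast
        have Rc: "?R a c" using IH c unfolding nbhd_def by auto
        have "c \<in> nbhd V E w" using c unfolding nbhd_def by auto
        hence "?R c p" using lemA[OF assms(1) assms(3) XV cX wX, of c p] c pN pX by blast
        thus "?R a p" using Rc by (meson rtranclp_trans)
      qed
    qed
  qed
  show "connected_on E (V - X)"
    unfolding connected_on_def
  proof (intro conjI ballI)
    show "V - X \<noteq> {}" by (rule ne)
    fix a b assume a: "a \<in> V - X" and b: "b \<in> V - X"
    have "(\<lambda>x y. x \<in> V \<and> y \<in> V \<and> E x y)\<^sup>*\<^sup>* a b" using conn a b by auto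
    thus "?R a b" using main[OF a] b by auto
  qed
qed

end
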